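(* Let $\mathcal{V}$ be a finite set of $n$ nodes, each carrying a label in $\{1,\dots,h\}$, and for $s\in[h]$ let $\mathcal{C}_s\subseteq\mathcal{V}$ be the set of nodes with label $s$, so that $\mathcal{V}=\dot{\bigcup}_{s\in[h]}\mathcal{C}_s$. Let $\mathbf{F}\in\{0,1\}^{n\times h}$ be the label-membership indicator matrix, $F_{i,s}=1$ if node $i$ has label $s$ and $F_{i,s}=0$ otherwise. Let $v\ge1$ and define $\widetilde{\mathbf{M}}\in\mathbb{R}^{h\times v}$ by $\widetilde{M}_{s,j}=\frac{|\mathcal{C}_s|}{\sqrt{nv}}$. For a partition $\mathcal{V}=\dot{\bigcup}_{j\in[v]}\mathcal{V}_j$ into nonempty parts, let $\mathbf{H}\in\mathbb{R}^{n\times v}$ be its normalized group-membership indicator matrix, $H_{ij}=1/\sqrt{|\mathcal{V}_j|}$ if $i\in\mathcal{V}_j$ and $H_{ij}=0$ otherwise. Then the partition is fair and balanced if and only if $\mathbf{F}^{\intercal}\mathbf{H}=\widetilde{\mathbf{M}}$.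
   Context: A partition $\mathcal{V}=\dot{\bigcup}_{j\in[v]}\mathcal{V}_j$ is called balanced if $|\mathcal{V}_j|=n/v$ for every $j\in[v]$, and fair if for every $j\in[v]$ and $s\in[h]$ the proportion of label $s$ in the part equals its proportion in the whole set: $\frac{|\mathcal{C}_s\cap\mathcal{V}_j|}{|\mathcal{V}_j|}=\frac{|\mathcal{C}_s|}{n}$. *)

theory Defs
  imports "HOL-Analysis.Analysis"
begin

text \<open>Nodes are 0..<n; lab i in {1..h} is the label of node i; grp i in {1..v} is the
  index of the part of the partition containing node i.\<close>

definition label_class :: "nat \<Rightarrow> (nat \<Rightarrow> nat) \<Rightarrow> nat \<Rightarrow> nat set" where
  "label_class n lab s = {i. i < n \<and> lab i = s}"

definition part_set :: "nat \<Rightarrow> (nat \<Rightarrow> nat) \<Rightarrow> nat \<Rightarrow> nat set" where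
  "part_set n grp j = {i. i < n \<and> grp i = j}"

definition F_mat :: "(nat \<Rightarrow> nat) \<Rightarrow> nat \<Rightarrow> nat \<Rightarrow> real" where
  "F_mat lab i s = (if lab i = s then 1 else 0)"

definition H_mat :: "nat \<Rightarrow> (nat \<Rightarrow> nat) \<Rightarrow> nat \<Rightarrow> nat \<Rightarrow> real" where
  "H_mat n grp i j = (if grp i = j then 1 / sqrt (real (card (part_set n grp j))) else 0)"

definition FtH :: "nat \<Rightarrow> (nat \<Rightarrow> nat) \<Rightarrow> (nat \<Rightarrow> nat) \<Rightarrow> nat \<Rightarrow> nat \<Rightarrow> real" where
  "FtH n lab grp s j = (\<Sum>i<n. F_mat lab i s * H_mat n grp i j)"

definition M_tilde :: "nat \<Rightarrow> nat \<Rightarrow> (nat \<Rightarrow> nat) \<Rightarrow> nat \<Rightarrow> nat \<Rightarrow> real" where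
  "M_tilde n v lab s j = real (card (label_class n lab s)) / sqrt (real n * real v)"

definition balanced :: "nat \<Rightarrow> nat \<Rightarrow> (nat \<Rightarrow> nat) \<Rightarrow> bool" where
  "balanced n v grp \<longleftrightarrow> (\<forall>j\<in>{1..v}. real (card (part_set n grp j)) = real n / real v)"

definition fair :: "nat \<Rightarrow> nat \<Rightarrow> nat \<Rightarrow> (nat \<Rightarrow> nat) \<Rightarrow> (nat \<Rightarrow> nat) \<Rightarrow> bool" where
  "fair n h v lab grp \<longleftrightarrow> (\<forall>j\<in>{1..v}. \<forall>s\<in>{1..h}.
      real (card (label_class n lab s \<inter> part_set n grp j)) / real (card (part_set n grp j))
      = real (card (label_class n lab s)) / real n)"

end

theory Submission
  imports Defs
begin

lemma FtH_eq:
  "FtH n lab grp s j = real (card (label_class n lab s \<inter> part_set n grp j)) / sqrt (real (card (part_set n grp j)))"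
proof -
  let ?c = "1 / sqrt (real (card (part_set n grp j)))"
  have "FtH n lab grp s j = (\<Sum>i\<in>{..<n}. if lab i = s \<and> grp i = j then ?c else 0)"
    unfolding FtH_def F_mat_def H_mat_def by (intro sum.cong) auto
  also have "\<dots> = (\<Sum>i\<in>{i\<in>{..<n}. lab i = s \<and> grp i = j}. ?c)"
    by (rule sum.inter_filter[symmetric]) simp
  also have "{i\<in>{..<n}. lab i = s \<and> grp i = j} = label_class n lab s \<inter> part_set n grp j"
    by (auto simp: label_class_def part_set_def)
  finally show ?thesis by simp
qed
lemma sum_card_classes:
  assumes "A \<subseteq> {..<n}" "\<forall>i<n. lab i \<in> {1..h}"
  shows "(\<Sum>s\<in>{1..h}. card (label_class n lab s \<inter> A)) = card A"
proof -
  have fin: "finite A" using assms(1) finite_subset by blast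
  have "A = (\<Union>s\<in>{1..h}. label_class n lab s \<inter> A)"
    using assms by (auto simp: label_class_def)
  hence "card A = card (\<Union>s\<in>{1..h}. label_class n lab s \<inter> A)" by simp
  also have "\<dots> = (\<Sum>s\<in>{1..h}. card (label_class n lab s \<inter> A))"
    by (rule card_UN_disjoint) (auto simp: label_class_def fin)
  finally show ?thesis by simp
qed

lemma aux1: fixes qq tt aa pp xx cc :: real
  assumes "qq > 0" "tt > 0" "pp = qq*qq" "aa = qq*tt"
  shows "xx / pp = cc / aa \<longleftrightarrow> xx / qq = cc / tt"
  using assms by (auto simp: field_simps)

lemma aux2: fixes pp aa bb :: real assumes "pp > 0" "aa > 0" "bb > 0" "pp = aa / bb"
  shows "sqrt pp * sqrt (aa*bb) = aa"
proof -
  have "sqrt pp * sqrt (aa*bb) = sqrt (pp*(aa*bb))" by (simp add: real_sqrt_mult)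
  also have "pp*(aa*bb) = aa*aa" using assms by (simp add: field_simps)
  finally show ?thesis using assms by simp
qed

lemma aux3: fixes pp aa tt :: real assumes "pp > 0" "tt > 0" "pp = aa * sqrt pp / tt"
  shows "sqrt pp * tt = aa"
proof -
  have "pp * tt = aa * sqrt pp" using assms by (simp add: field_simps)
  moreover have "pp = sqrt pp * sqrt pp" using assms by simp
  ultimately have "sqrt pp * (sqrt pp * tt) = sqrt pp * aa" by (metis mult.assoc mult.commute)
  moreover have "sqrt pp \<noteq> 0" using assms by simp
  ultimately show ?thesis by simp
qed

lemma aux4: fixes pp aa bb :: real assumes "pp > 0" "aa > 0" "bb > 0" "sqrt pp * sqrt (aa*bb) = aa"
  shows "pp = aa / bb"
proof -
  have "pp*(aa*bb) = sqrt pp * sqrt pp * (sqrt (aa * bb) * sqrt (aa * bb))" using assms by simp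
  also have "\<dots> = (sqrt pp * sqrt (aa * bb))*(sqrt pp * sqrt (aa * bb))" by (simp add: ac_simps)
  also have "\<dots> = aa*aa" using assms(4) by simp
  finally show ?thesis using assms by (simp add: field_simps)
qed

theorem theorem2:
  fixes n h v :: nat and lab grp :: "nat \<Rightarrow> nat"
  assumes lab_range: "\<forall>i<n. lab i \<in> {1..h}"
    and v_pos: "v \<ge> 1"
    and part_range: "\<forall>i<n. grp i \<in> {1..v}"
    and part_nonempty: "\<forall>j\<in>{1..v}. part_set n grp j \<noteq> {}"
  shows "(fair n h v lab grp \<and> balanced n v grp) \<longleftrightarrow>
         (\<forall>s\<in>{1..h}. \<forall>j\<in>{1..v}. FtH n lab grp s j = M_tilde n v lab s j)"
proof -
  define C where "C s = real (card (label_class n lab s))" for s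
  define P where "P j = real (card (part_set n grp j))" for j
  define X where "X s j = real (card (label_class n lab s \<inter> part_set n grp j))" for s j
  have sub: "part_set n grp j \<subseteq> {..<n}" for j by (auto simp: part_set_def)
  have Ppos: "P j > 0" if "j \<in> {1..v}" for j
    using part_nonempty that sub[of j] finite_subset[OF sub[of j]]
    by (auto simp: P_def card_gt_0_iff)
  have npos: "real n > 0"
  proof -
    have "P 1 > 0" using Ppos v_pos by auto
    moreover have "P 1 \<le> real n" unfolding P_def using card_mono[OF _ sub[of 1]] by simp
    ultimately show ?thesis by simp
  qed
  have vpos: "real v > 0" using v_pos by simp
  have sumX: "(\<Sum>s\<in>{1..h}. X s j) = P j" for j
  proof -
    have "(\<Sum>s\<in>{1..h}. X s j) = real (\<Sum>s\<in>{1..h}. card (label_class n lab s \<inter> part_set n grp j))"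
      unfolding X_def by simp
    also have "\<dots> = P j" unfolding P_def using sum_card_classes[OF sub[of j] lab_range] by simp
    finally show ?thesis .
  qed
  have sumC: "(\<Sum>s\<in>{1..h}. C s) = real n"
  proof -
    have e: "label_class n lab s \<inter> {..<n} = label_class n lab s" for s
      by (auto simp: label_class_def)
    have "(\<Sum>s\<in>{1..h}. card (label_class n lab s \<inter> {..<n})) = n"
      using sum_card_classes[of "{..<n}" n lab h] lab_range by simp
    hence "(\<Sum>s\<in>{1..h}. card (label_class n lab s)) = n" by (simp add: e)
    hence "real (\<Sum>s\<in>{1..h}. card (label_class n lab s)) = real n" by simp
    thus ?thesis unfolding C_def by simp
  qed
  have sq: "sqrt (real n * real v) > 0" using npos vpos by simp
  have FtH': "FtH n lab grp s j = X s j / sqrt (P j)" for s j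
    using FtH_eq unfolding X_def P_def by simp
  have M': "M_tilde n v lab s j = C s / sqrt (real n * real v)" for s j
    unfolding M_tilde_def C_def by simp
  show ?thesis
  proof
    assume A: "fair n h v lab grp \<and> balanced n v grp"
    show "\<forall>s\<in>{1..h}. \<forall>j\<in>{1..v}. FtH n lab grp s j = M_tilde n v lab s j"
    proof (intro ballI)
      fix s j assume s: "s \<in> {1..h}" and j: "j \<in> {1..v}"
      have Pj: "P j = real n / real v" using A j unfolding balanced_def P_def by auto
      have Xs: "X s j / P j = C s / real n" using A j s unfolding fair_def X_def P_def C_def by auto
      have pj: "P j > 0" using Ppos j by simp
      have e: "sqrt (P j) * sqrt (real n * real v) = real n"
        using aux2[OF pj npos vpos Pj] .
      have "X s j / sqrt (P j) = C s / sqrt (real n * real v)"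
      proof -
        have q: "sqrt (P j) > 0" using pj by simp
        have pp: "P j = sqrt (P j) * sqrt (P j)" using pj by simp
        show ?thesis using aux1[OF q sq pp e[symmetric], of "X s j" "C s"] Xs by blast
      qed
      thus "FtH n lab grp s j = M_tilde n v lab s j" by (simp add: FtH' M')
    qed
  next
    assume B: "\<forall>s\<in>{1..h}. \<forall>j\<in>{1..v}. FtH n lab grp s j = M_tilde n v lab s j"
    have Xe: "X s j = C s * sqrt (P j) / sqrt (real n * real v)" if "s \<in> {1..h}" "j \<in> {1..v}" for s j
    proof -
      have "X s j / sqrt (P j) = C s / sqrt (real n * real v)" using B that by (simp add: FtH' M')
      thus ?thesis using Ppos[OF that(2)] sq by (simp add: field_simps)
    qed
    have bal: "P j = real n / real v" if j: "j \<in> {1..v}" for j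
    proof -
      have "P j = (\<Sum>s\<in>{1..h}. X s j)" using sumX[of j] by simp
      also have "\<dots> = (\<Sum>s\<in>{1..h}. C s * sqrt (P j) / sqrt (real n * real v))"
        using Xe j by (intro sum.cong) simp_all
      also have "\<dots> = real n * sqrt (P j) / sqrt (real n * real v)"
        by (simp only: sum_divide_distrib[symmetric] sum_distrib_right[symmetric] sumC)
      finally have e: "P j = real n * sqrt (P j) / sqrt (real n * real v)" .
      have pj: "P j > 0" using Ppos j by simp
      have "sqrt (P j) * sqrt (real n * real v) = real n" using aux3[OF pj sq e] .
      from aux4[OF pj npos vpos this] show ?thesis .
    qed
    have "balanced n v grp" unfolding balanced_def using bal P_def by simp
    moreover have "fair n h v lab grp"
      unfolding fair_def
    proof (intro ballI)
      fix j s assume j: "j \<in> {1..v}" and s: "s \<in> {1..h}"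
      have pj: "P j > 0" using Ppos j by simp
      have e: "sqrt (P j) * sqrt (real n * real v) = real n"
        using aux2[OF pj npos vpos bal[OF j]] .
      have "X s j / sqrt (P j) = C s / sqrt (real n * real v)"
        using Xe[OF s j] pj sq by (simp add: field_simps)
      then have "X s j / P j = C s / real n"
      proof -
        have q: "sqrt (P j) > 0" using pj by simp
        have pp: "P j = sqrt (P j) * sqrt (P j)" using pj by simp
        show ?thesis using aux1[OF q sq pp e[symmetric], of "X s j" "C s"] \<open>X s j / sqrt (P j) = C s / sqrt (real n * real v)\<close> by blast
      qed
      thus "real (card (label_class n lab s \<inter> part_set n grp j)) / real (card (part_set n grp j)) =
            real (card (label_class n lab s)) / real n" by (simp add: X_def P_def C_def)
    qed
    ultimately show "fair n h v lab grp \<and> balanced n v grp" by simp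
  qed
qed

end
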